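(* Assume $(\mu,\vec w_1,\vec w_2)$ is a perfect combination and let $g=S^{-1}\bar S$ be the Gauss–Borel factorization of its moment matrix. Define, for $l\ge0$, $A^{(l)}_a(x)=\sum_{i\le l,\ a_1(i)=a}S_{l,i}x^{k_1(i)}$ ($a=1,\dots,p_1$) and $\bar A^{(l)}_b(x)=\sum_{j\le l,\ a_2(j)=b}x^{k_2(j)}\bar S'_{j,l}$ ($b=1,\dots,p_2$), where $\bar S'=\bar S^{-1}$. Then: (i) $(A^{(l)}_1,\dots,A^{(l)}_{p_1})$ is the unique tuple of polynomials with $\deg A^{(l)}_a\le\nu_{1,a}(l)-1$, with $A^{(l)}_{a_1(l)}$ monic of degree $\nu_{1,a_1(l)}(l)-1$, and $$\int\Big(\sum_{a=1}^{p_1}A^{(l)}_a(x)w_{1,a}(x)\Big)w_{2,b}(x)x^k\,d\mu(x)=0,\qquad 0\le k\le\nu_{2,b}(l-1)-1,\ b=1,\dots,p_2;$$ i.e. it is the mixed multiple orthogonal polynomial system with degree vectors $[\vec\nu_1(l);\vec\nu_2(l-1)]$ and type II normalization in the component $a_1(l)$. (ii) $(\bar A^{(l)}_1,\dots,\bar A^{(l)}_{p_2})$ is the unique tuple of polynomials with $\deg\bar A^{(l)}_b\le\nu_{2,b}(l)-1$ such that $$\int\Big(\sum_{b=1}^{p_2}\bar A^{(l)}_b(x)w_{2,b}(x)\Big)w_{1,a}(x)x^k\,d\mu(x)=0,\qquad 0\le k\le\nu_{1,a}(l-1)-1,\ a=1,\dots,p_1,$$ and $\int\big(\sum_{b}\bar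 A^{(l)}_b(x)w_{2,b}(x)\big)w_{1,a_1(l)}(x)x^{\nu_{1,a_1(l)}(l-1)}d\mu(x)=1$; i.e. it is the mixed multiple orthogonal system with degree vectors $[\vec\nu_2(l);\vec\nu_1(l-1)]$ and type I normalization with respect to $a_1(l)$.
   Context: Let $\mu$ be a finite Borel measure on an interval $\Delta\subset\mathbb R$ with infinitely many points in its support, not changing sign, and $w_{1,a}$ ($a=1,\dots,p_1$), $w_{2,b}$ ($b=1,\dots,p_2$) real integrable functions on $\Delta$ not changing sign (all integrals finite). Compositions $\vec n_\ell=(n_{\ell,1},\dots,n_{\ell,p_\ell})\in\mathbb N^{p_\ell}$, $\ell=1,2$, are fixed. Each $i\in\mathbb Z_+$ is uniquely $i=q|\vec n_\ell|+n_{\ell,1}+\dots+n_{\ell,a-1}+r$, $0\le r<n_{\ell,a}$; put $a_\ell(i)=a$, $k_\ell(i)=qn_{\ell,a}+r$. The moment matrix is $g=(g_{i,j})_{i,j\ge0}$, $g_{i,j}=\int x^{k_1(i)+k_2(j)}w_{1,a_1(i)}(x)w_{2,a_2(j)}(x)\,d\mu(x)$. Degree vectors: $\nu_{\ell,a}(i)=\#\{0\le j\le i:a_\ell(j)=a\}$ (so $|\vec\nu_\ell(i)|=i+1$), $\vec\nu_\ell(-1)=0$. The combination $(\mu,\vec w_1,\vec w_2)$ is perfect if for all $\vec\nu_1\in\mathbb Z_+^{p_1}$, $\vec\nu_2\in\mathbb Z_+^{p_2}$ with $|\vec\nu_1|=|\vec\nu_2|+1$, any polynomials $A_1,\dots,A_{p_1}$,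 not all zero, with $\deg A_a\le\nu_{1,a}-1$ and $\int\sum_aA_aw_{1,a}w_{2,b}x^jd\mu=0$ for $j=0,\dots,\nu_{2,b}-1$, $b=1,\dots,p_2$, satisfy $\deg A_a=\nu_{1,a}-1$ for all $a$. For a perfect combination all $\det g^{[l]}\neq0$, $g^{[l]}=(g_{i,j})_{0\le i,j<l}$, and the Gauss–Borel factorization $g=S^{-1}\bar S$ exists uniquely, with $S$ lower triangular with unit diagonal and $\bar S$ upper triangular with nonzero diagonal (semi-infinite matrices). *)

theory Defs
  imports "HOL-Analysis.Analysis" "HOL-Computational_Algebra.Polynomial"
begin

text \<open>A composition is a nonempty list of positive naturals; its entries are
  indexed 1..length. blk n i is the block index a(i) (in 1..p), kexp n i is k(i).\<close>

definition composition :: "nat list \<Rightarrow> bool" where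
  "composition n \<longleftrightarrow> n \<noteq> [] \<and> (\<forall>x\<in>set n. 0 < x)"

definition blk :: "nat list \<Rightarrow> nat \<Rightarrow> nat" where
  "blk n i = (LEAST a. i mod sum_list n < sum_list (take a n))"

definition kexp :: "nat list \<Rightarrow> nat \<Rightarrow> nat" where
  "kexp n i = (i div sum_list n) * (n ! (blk n i - 1))
              + (i mod sum_list n - sum_list (take (blk n i - 1) n))"

text \<open>nuc n a m = #{0 \<le> j < m. a(j) = a}; hence nu_a(i) = nuc n a (i+1) and
  nu_a(-1) = nuc n a 0 = 0.\<close>
definition nuc :: "nat list \<Rightarrow> nat \<Rightarrow> nat \<Rightarrow> nat" where
  "nuc n a m = card {j. j < m \<and> blk n j = a}"

definition moment :: "real measure \<Rightarrow> nat list \<Rightarrow> nat list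
    \<Rightarrow> (nat \<Rightarrow> real \<Rightarrow> real) \<Rightarrow> (nat \<Rightarrow> real \<Rightarrow> real) \<Rightarrow> nat \<Rightarrow> nat \<Rightarrow> real" where
  "moment M n1 n2 w1 w2 i j =
     (\<integral>x. x ^ (kexp n1 i + kexp n2 j) * w1 (blk n1 i) x * w2 (blk n2 j) x \<partial>M)"

text \<open>deg A \<le> m - 1 (with deg 0 = -infinity) and deg A = m - 1.\<close>
definition deg_le :: "real poly \<Rightarrow> nat \<Rightarrow> bool" where
  "deg_le A m \<longleftrightarrow> A = 0 \<or> degree A + 1 \<le> m"

definition deg_eq :: "real poly \<Rightarrow> nat \<Rightarrow> bool" where
  "deg_eq A m \<longleftrightarrow> (if m = 0 then A = 0 else A \<noteq> 0 \<and> degree A = m - 1)"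

definition perfect :: "real measure \<Rightarrow> nat \<Rightarrow> nat \<Rightarrow> (nat \<Rightarrow> real \<Rightarrow> real)
    \<Rightarrow> (nat \<Rightarrow> real \<Rightarrow> real) \<Rightarrow> bool" where
  "perfect M p1 p2 w1 w2 \<longleftrightarrow>
     (\<forall>\<nu>1 \<nu>2 :: nat \<Rightarrow> nat. (\<Sum>a=1..p1. \<nu>1 a) = (\<Sum>b=1..p2. \<nu>2 b) + 1 \<longrightarrow>
       (\<forall>A :: nat \<Rightarrow> real poly.
          (\<exists>a\<in>{1..p1}. A a \<noteq> 0)
          \<and> (\<forall>a\<in>{1..p1}. deg_le (A a) (\<nu>1 a))
          \<and> (\<forall>b\<in>{1..p2}. \<forall>j<\<nu>2 b.
                (\<integral>x. (\<Sum>a=1..p1. poly (A a) x * w1 a x) * w2 b x * x ^ j \<partial>M) = 0)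
          \<longrightarrow> (\<forall>a\<in>{1..p1}. deg_eq (A a) (\<nu>1 a))))"

definition measure_support :: "real measure \<Rightarrow> real set" where
  "measure_support M = {x. \<forall>e>0. emeasure M (ball x e) \<noteq> 0}"

definition not_changing_sign :: "real set \<Rightarrow> (real \<Rightarrow> real) \<Rightarrow> bool" where
  "not_changing_sign D f \<longleftrightarrow> (\<forall>x\<in>D. 0 \<le> f x) \<or> (\<forall>x\<in>D. f x \<le> 0)"

definition typeII_sys :: "real measure \<Rightarrow> nat list \<Rightarrow> nat list
    \<Rightarrow> (nat \<Rightarrow> real \<Rightarrow> real) \<Rightarrow> (nat \<Rightarrow> real \<Rightarrow> real) \<Rightarrow> nat \<Rightarrow> (nat \<Rightarrow> real poly) \<Rightarrow> bool" where
  "typeII_sys M n1 n2 w1 w2 l A \<longleftrightarrow>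
     (\<forall>a\<in>{1..length n1}. deg_le (A a) (nuc n1 a (Suc l)))
     \<and> degree (A (blk n1 l)) = nuc n1 (blk n1 l) (Suc l) - 1
     \<and> lead_coeff (A (blk n1 l)) = 1
     \<and> (\<forall>b\<in>{1..length n2}. \<forall>k < nuc n2 b l.
          (\<integral>x. (\<Sum>a=1..length n1. poly (A a) x * w1 a x) * w2 b x * x ^ k \<partial>M) = 0)"

definition typeI_sys :: "real measure \<Rightarrow> nat list \<Rightarrow> nat list
    \<Rightarrow> (nat \<Rightarrow> real \<Rightarrow> real) \<Rightarrow> (nat \<Rightarrow> real \<Rightarrow> real) \<Rightarrow> nat \<Rightarrow> (nat \<Rightarrow> real poly) \<Rightarrow> bool" where
  "typeI_sys M n1 n2 w1 w2 l B \<longleftrightarrow>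
     (\<forall>b\<in>{1..length n2}. deg_le (B b) (nuc n2 b (Suc l)))
     \<and> (\<forall>a\<in>{1..length n1}. \<forall>k < nuc n1 a l.
          (\<integral>x. (\<Sum>b=1..length n2. poly (B b) x * w2 b x) * w1 a x * x ^ k \<partial>M) = 0)
     \<and> (\<integral>x. (\<Sum>b=1..length n2. poly (B b) x * w2 b x) * w1 (blk n1 l) x
            * x ^ (nuc n1 (blk n1 l) l) \<partial>M) = 1"

end

theory Submission imports Defs begin
abbreviation sl :: "nat list \<Rightarrow> nat \<Rightarrow> nat" where "sl n a \<equiv> sum_list (take a n)"

lemma sl_Suc: "a < length n \<Longrightarrow> sl n (Suc a) = sl n a + n ! a"
  by (simp add: take_Suc_conv_app_nth)

lemma sl_mono: "a \<le> b \<Longrightarrow> sl n a \<le> sl n b"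
proof -
  assume "a \<le> b"
  then obtain d where "b = a + d" using le_Suc_ex by blast
  then show ?thesis by (simp add: take_add)
qed

lemma sl_full: "length n \<le> a \<Longrightarrow> sl n a = sum_list n" by simp

lemma comp_pos: assumes "composition n" shows "0 < sum_list n"
proof -
  obtain x xs where n: "n = x # xs" using assms unfolding composition_def by (cases n) auto
  hence "0 < x" using assms unfolding composition_def by auto
  thus ?thesis using n by simp
qed

lemma comp_entry: "composition n \<Longrightarrow> a < length n \<Longrightarrow> 0 < n ! a"
  unfolding composition_def by auto

lemma blk_props:
  assumes c: "composition n"
  shows "1 \<le> blk n i \<and> blk n i \<le> length n \<and> sl n (blk n i - 1) \<le> i mod sum_list n
     \<and> i mod sum_list n < sl n (blk n i)"
proof -
  let ?r = "i mod sum_list n"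
  have N: "0 < sum_list n" using comp_pos[OF c] .
  have ex: "?r < sl n (length n)" using N by simp
  have b: "blk n i = (LEAST a. ?r < sl n a)" unfolding blk_def ..
  have lt: "?r < sl n (blk n i)" unfolding b by (rule LeastI[of _ "length n"]) (rule ex)
  have le: "blk n i \<le> length n" unfolding b by (rule Least_le) (rule ex)
  have ge: "1 \<le> blk n i" using lt by (cases "blk n i") auto
  have "\<not> ?r < sl n (blk n i - 1)"
  proof
    assume "?r < sl n (blk n i - 1)"
    hence "(LEAST a. ?r < sl n a) \<le> blk n i - 1" by (rule Least_le)
    thus False using ge b by simp
  qed
  thus ?thesis using lt le ge by simp
qed

lemma blk_char:
  assumes c: "composition n" and "1 \<le> a" "a \<le> length n"
    "sl n (a - 1) \<le> i mod sum_list n" "i mod sum_list n < sl n a"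
  shows "blk n i = a"
  unfolding blk_def
proof (rule Least_equality)
  show "i mod sum_list n < sl n a" by fact
  fix a' assume "i mod sum_list n < sl n a'"
  show "a \<le> a'"
  proof (rule ccontr)
    assume "\<not> a \<le> a'" hence "a' \<le> a - 1" by simp
    hence "sl n a' \<le> sl n (a - 1)" by (rule sl_mono)
    thus False using assms \<open>i mod sum_list n < sl n a'\<close> by simp
  qed
qed

lemma blk_range: "composition n \<Longrightarrow> blk n i \<in> {1..length n}"
  using blk_props by auto

lemma nuc_0: "nuc n a 0 = 0" unfolding nuc_def by simp

lemma nuc_Suc: "nuc n a (Suc i) = nuc n a i + (if blk n i = a then 1 else 0)"
proof -
  have "{j. j < Suc i \<and> blk n j = a} = (if blk n i = a then insert i {j. j < i \<and> blk n j = a}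
     else {j. j < i \<and> blk n j = a})" by (auto simp: less_Suc_eq)
  thus ?thesis unfolding nuc_def by auto
qed

definition HH :: "nat list \<Rightarrow> nat \<Rightarrow> nat \<Rightarrow> nat" where
  "HH n a i = (i div sum_list n) * (n ! (a - 1))
     + min (n ! (a - 1)) (i mod sum_list n - sl n (a - 1))"

lemma HH_Suc:
  assumes c: "composition n" and a: "a \<in> {1..length n}"
  shows "HH n a (Suc i) = HH n a i + (if blk n i = a then 1 else 0)"
proof -
  define N where "N = sum_list n"
  define q where "q = i div N"
  define r where "r = i mod N"
  define S0 where "S0 = sl n (a - 1)"
  define na where "na = n ! (a - 1)"
  have N: "0 < N" using comp_pos[OF c] N_def by simp
  have rN: "r < N" using N r_def by simp
  have na: "0 < na" using comp_entry[OF c, of "a - 1"] a na_def by auto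
  have sa: "sl n a = S0 + na" using sl_Suc[of "a - 1" n] a S0_def na_def by auto
  have saN: "S0 + na \<le> N" using sa sl_mono[of a "length n" n] a N_def by auto
  have iff: "blk n i = a \<longleftrightarrow> S0 \<le> r \<and> r < S0 + na"
    using blk_props[OF c, of i] blk_char[OF c, of a i] a sa
    unfolding S0_def r_def N_def by auto
  have i: "i = q * N + r" unfolding q_def r_def by simp
  have H1: "HH n a i = q * na + min na (r - S0)" unfolding HH_def q_def r_def S0_def na_def N_def by simp
  have H2: "HH n a (Suc i) = (Suc i div N) * na + min na (Suc i mod N - S0)"
    unfolding HH_def S0_def na_def N_def by simp
  show ?thesis
  proof (cases "Suc r < N")
    case True
    have e: "Suc i = Suc r + q * N" using i by simp
    have d1: "(Suc r + q * N) div N = q + Suc r div N" by (rule div_mult_self1) (use N in simp)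
    have "Suc i div N = q" unfolding e d1 using True by simp
    moreover have "Suc i mod N = Suc r" unfolding e mod_mult_self1 using True by simp
    ultimately have "Suc i div N = q" "Suc i mod N = Suc r" by auto
    then show ?thesis unfolding H1 H2 using iff by (auto simp: min_def)
  next
    case False
    hence rr: "Suc r = N" using rN by simp
    have "Suc i = Suc q * N" using i rr by simp
    hence "Suc i div N = Suc q" "Suc i mod N = 0" using N by simp_all
    then show ?thesis unfolding H1 H2 using iff rr saN na by (auto simp: min_def)
  qed
qed

lemma nuc_HH: "composition n \<Longrightarrow> a \<in> {1..length n} \<Longrightarrow> nuc n a i = HH n a i"
proof (induction i)
  case 0 then show ?case by (simp add: nuc_0 HH_def)
next
  case (Suc i) then show ?case by (simp add: nuc_Suc HH_Suc)
qed

lemma kexp_nuc: assumes c: "composition n" shows "kexp n i = nuc n (blk n i) i"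
proof -
  have a: "blk n i \<in> {1..length n}" by (rule blk_range[OF c])
  have sa: "sl n (blk n i) = sl n (blk n i - 1) + n ! (blk n i - 1)"
    using sl_Suc[of "blk n i - 1" n] a by auto
  have m: "min (n ! (blk n i - 1)) (i mod sum_list n - sl n (blk n i - 1)) = i mod sum_list n - sl n (blk n i - 1)"
    using blk_props[OF c, of i] sa by (auto simp: min_def)
  show ?thesis using nuc_HH[OF c a, of i]
    unfolding kexp_def HH_def m by simp
qed


lemma nuc_mono: "i \<le> m \<Longrightarrow> nuc n a i \<le> nuc n a m"
  unfolding nuc_def by (rule card_mono) auto

lemma N1: "composition n \<Longrightarrow> j < m \<Longrightarrow> kexp n j < nuc n (blk n j) m"
  using kexp_nuc[of n j] nuc_Suc[of n "blk n j" j] nuc_mono[of "Suc j" m n "blk n j"] by simp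

lemma N3: assumes c: "composition n" and "blk n i = blk n j" "kexp n i = kexp n j" shows "i = j"
proof (rule ccontr)
  assume "i \<noteq> j"
  hence "i < j \<or> j < i" by auto
  thus False
  proof
    assume "i < j"
    hence "kexp n i < nuc n (blk n i) j" by (rule N1[OF c])
    thus False using kexp_nuc[OF c, of j] assms by simp
  next
    assume "j < i"
    hence "kexp n j < nuc n (blk n j) i" by (rule N1[OF c])
    thus False using kexp_nuc[OF c, of i] assms by simp
  qed
qed

lemma N2: "composition n \<Longrightarrow> k < nuc n a m \<Longrightarrow> \<exists>j<m. blk n j = a \<and> kexp n j = k"
proof (induction m)
  case 0 then show ?case by (simp add: nuc_0)
next
  case (Suc m)
  show ?case
  proof (cases "k < nuc n a m")
    case True then show ?thesis using Suc by (meson less_SucI)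
  next
    case False
    then have "blk n m = a" "k = nuc n a m" using Suc.prems nuc_Suc[of n a m] by (auto split: if_splits)
    then show ?thesis using kexp_nuc[OF Suc.prems(1), of m] by auto
  qed
qed

definition rep :: "nat list \<Rightarrow> nat \<Rightarrow> (nat \<Rightarrow> real) \<Rightarrow> nat \<Rightarrow> real poly" where
  "rep n l c a = (\<Sum>i\<in>{i. i \<le> l \<and> blk n i = a}. monom (c i) (kexp n i))"

lemma fin_set: "finite {i. i \<le> l \<and> blk n i = a}" by simp

lemma coeff_rep: "coeff (rep n l c a) k = (\<Sum>i\<in>{i. i \<le> l \<and> blk n i = a}. if kexp n i = k then c i else 0)"
  unfolding rep_def by (simp add: coeff_sum coeff_monom)

lemma coeff_rep_hit:
  assumes c: "composition n" and "i \<le> l" shows "coeff (rep n l c' (blk n i)) (kexp n i) = c' i"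
proof -
  let ?S = "{j. j \<le> l \<and> blk n j = blk n i}"
  have i: "i \<in> ?S" using assms by simp
  have "(\<Sum>j\<in>?S. if kexp n j = kexp n i then c' j else 0)
       = (if kexp n i = kexp n i then c' i else 0) + (\<Sum>j\<in>?S - {i}. if kexp n j = kexp n i then c' j else 0)"
    by (rule sum.remove[OF fin_set i])
  also have "(\<Sum>j\<in>?S - {i}. if kexp n j = kexp n i then c' j else 0) = 0"
  proof (rule sum.neutral, intro ballI)
    fix j assume "j \<in> ?S - {i}"
    hence "blk n j = blk n i" "j \<noteq> i" by auto
    hence "kexp n j \<noteq> kexp n i" using N3[OF c, of j i] by blast
    thus "(if kexp n j = kexp n i then c' j else 0) = 0" by simp
  qed
  finally show ?thesis by (simp add: coeff_rep)
qed

lemma coeff_rep_miss: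
  "(\<And>i. i \<le> l \<Longrightarrow> blk n i = a \<Longrightarrow> kexp n i \<noteq> k) \<Longrightarrow> coeff (rep n l c a) k = 0"
  unfolding coeff_rep by (rule sum.neutral) auto

lemma deg_le_coeff: "(\<And>k. m \<le> k \<Longrightarrow> coeff P k = 0) \<Longrightarrow> deg_le P m"
  unfolding deg_le_def
proof (cases "P = 0")
  case False
  assume h: "\<And>k. m \<le> k \<Longrightarrow> coeff P k = 0"
  have "coeff P (degree P) \<noteq> 0" using False by simp
  hence "degree P < m" using h by (meson not_le)
  thus "P = 0 \<or> degree P + 1 \<le> m" by simp
qed simp

lemma rep_deg_le: assumes c: "composition n" shows "deg_le (rep n l c' a) (nuc n a (Suc l))"
proof (rule deg_le_coeff, rule coeff_rep_miss)
  fix k i assume "nuc n a (Suc l) \<le> k" "i \<le> l" "blk n i = a"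
  thus "kexp n i \<noteq> k" using N1[OF c, of i "Suc l"] by auto
qed

lemma rep_repr:
  assumes c: "composition n" and d: "deg_le P (nuc n a (Suc l))"
    and dd: "\<And>i. i \<le> l \<Longrightarrow> blk n i = a \<Longrightarrow> e i = coeff P (kexp n i)"
  shows "P = rep n l e a"
proof (rule poly_eqI)
  fix k
  show "coeff P k = coeff (rep n l e a) k"
  proof (cases "\<exists>i. i \<le> l \<and> blk n i = a \<and> kexp n i = k")
    case True
    then obtain i where i: "i \<le> l" "blk n i = a" "kexp n i = k" by blast
    show ?thesis using coeff_rep_hit[OF c i(1), of e] i dd[OF i(1,2)] by simp
  next
    case False
    hence "coeff (rep n l e a) k = 0" by (intro coeff_rep_miss) auto
    moreover have "nuc n a (Suc l) \<le> k"
    proof (rule ccontr)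
      assume "\<not> nuc n a (Suc l) \<le> k"
      then obtain j where "j < Suc l" "blk n j = a" "kexp n j = k" using N2[OF c, of k a "Suc l"] by auto
      thus False using False by auto
    qed
    hence "coeff P k = 0" using d unfolding deg_le_def by (auto intro: coeff_eq_0)
    ultimately show ?thesis by simp
  qed
qed

lemma rep_cong: "(\<And>i. i \<le> l \<Longrightarrow> c i = c' i) \<Longrightarrow> rep n l c a = rep n l c' a"
  unfolding rep_def by (rule sum.cong) auto

lemma rep_pointwise:
  assumes c: "composition n"
  shows "(\<Sum>a=1..length n. poly (rep n l cc a) x * w a x) = (\<Sum>i\<le>l. cc i * x ^ kexp n i * w (blk n i) x)"
proof -
  have "(\<Sum>a=1..length n. poly (rep n l cc a) x * w a x)
     = (\<Sum>a=1..length n. \<Sum>i\<in>{i. i \<in> {..l} \<and> blk n i = a}. cc i * x ^ kexp n i * w (blk n i) x)"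
    unfolding rep_def poly_sum poly_monom sum_distrib_right
    by (rule sum.cong, simp, rule sum.cong) auto
  also have "\<dots> = (\<Sum>i\<le>l. cc i * x ^ kexp n i * w (blk n i) x)"
    by (rule sum.group) (use blk_range[OF c] in auto)
  finally show ?thesis .
qed

lemma split_last: "(\<Sum>k\<le>(i::nat). f k) = f i + (\<Sum>k<i. f k)"
proof -
  have "{..i} = insert i {..<i}" by auto
  thus ?thesis by simp
qed

lemma unitri_inv:
  fixes S :: "nat \<Rightarrow> nat \<Rightarrow> real" and X :: "nat \<Rightarrow> real"
  assumes d: "\<And>i. S i i = 1" and lo: "\<And>i j. i < j \<Longrightarrow> S i j = 0"
    and h: "\<And>i. (\<Sum>k\<le>i. S i k * X k) = (if i = m then 1 else 0)"
  shows "(\<forall>i<m. X i = 0) \<and> X m = 1"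
proof -
  have z: "X i = 0" if "i < m" for i
    using that
  proof (induction i rule: less_induct)
    case (less i)
    have "(\<Sum>k<i. S i k * X k) = 0" by (rule sum.neutral) (use less in auto)
    thus ?case using h[of i] less.prems split_last[of "\<lambda>k. S i k * X k" i] d[of i] by simp
  qed
  have "(\<Sum>k<m. S m k * X k) = 0" by (rule sum.neutral) (use z in auto)
  hence "X m = 1" using h[of m] split_last[of "\<lambda>k. S m k * X k" m] d[of m] by simp
  thus ?thesis using z by auto
qed

lemma delta_sum:
  fixes f :: "nat \<Rightarrow> real"
  assumes "finite A" "m \<in> A" "\<And>i. i \<in> A \<Longrightarrow> i \<noteq> m \<Longrightarrow> f i = 0"
  shows "sum f A = f m"
proof -
  have "sum f A = f m + sum f (A - {m})" by (rule sum.remove) (use assms in auto)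
  also have "sum f (A - {m}) = 0" by (rule sum.neutral) (use assms in auto)
  finally show ?thesis by simp
qed

lemma expand_int:
  fixes M :: "real measure"
  assumes c1: "composition n1" and c2: "composition n2"
    and mf: "\<And>a b k. a \<in> {1..length n1} \<Longrightarrow> b \<in> {1..length n2} \<Longrightarrow>
                         integrable M (\<lambda>x. x ^ k * w1 a x * w2 b x)"
  shows "(\<integral>x. (\<Sum>a=1..length n1. poly (rep n1 l c a) x * w1 a x) * w2 (blk n2 j) x * x ^ (kexp n2 j) \<partial>M)
       = (\<Sum>i\<le>l. c i * moment M n1 n2 w1 w2 i j)"
    and "(\<integral>x. (\<Sum>b=1..length n2. poly (rep n2 l c b) x * w2 b x) * w1 (blk n1 i) x * x ^ (kexp n1 i) \<partial>M)
       = (\<Sum>j\<le>l. moment M n1 n2 w1 w2 i j * c j)"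
proof -
  have int: "integrable M (\<lambda>x. cc * (x ^ (kexp n1 i + kexp n2 j) * w1 (blk n1 i) x * w2 (blk n2 j) x))"
    for cc i j
    by (intro integrable_mult_right mf blk_range c1 c2)
  have pw1: "(\<Sum>a=1..length n1. poly (rep n1 l c a) x * w1 a x) * w2 (blk n2 j) x * x ^ (kexp n2 j)
     = (\<Sum>i\<le>l. c i * (x ^ (kexp n1 i + kexp n2 j) * w1 (blk n1 i) x * w2 (blk n2 j) x))" for x
    unfolding rep_pointwise[OF c1] sum_distrib_right
    by (rule sum.cong[OF refl]) (simp add: power_add mult_ac)
  have "(\<integral>x. (\<Sum>a=1..length n1. poly (rep n1 l c a) x * w1 a x) * w2 (blk n2 j) x * x ^ (kexp n2 j) \<partial>M)
     = (\<integral>x. (\<Sum>i\<le>l. c i * (x ^ (kexp n1 i + kexp n2 j) * w1 (blk n1 i) x * w2 (blk n2 j) x)) \<partial>M)"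
    unfolding pw1 ..
  also have "\<dots> = (\<Sum>i\<le>l. \<integral>x. c i * (x ^ (kexp n1 i + kexp n2 j) * w1 (blk n1 i) x * w2 (blk n2 j) x) \<partial>M)"
    by (rule Bochner_Integration.integral_sum[where f="\<lambda>i x. c i * (x ^ (kexp n1 i + kexp n2 j) * w1 (blk n1 i) x * w2 (blk n2 j) x)"]) (rule int)
  also have "\<dots> = (\<Sum>i\<le>l. c i * moment M n1 n2 w1 w2 i j)"
    unfolding moment_def by (rule sum.cong[OF refl]) (rule integral_mult_right_zero)
  finally show "(\<integral>x. (\<Sum>a=1..length n1. poly (rep n1 l c a) x * w1 a x) * w2 (blk n2 j) x * x ^ (kexp n2 j) \<partial>M)
       = (\<Sum>i\<le>l. c i * moment M n1 n2 w1 w2 i j)" .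
  have pw2: "(\<Sum>b=1..length n2. poly (rep n2 l c b) x * w2 b x) * w1 (blk n1 i) x * x ^ (kexp n1 i)
     = (\<Sum>j\<le>l. c j * (x ^ (kexp n1 i + kexp n2 j) * w1 (blk n1 i) x * w2 (blk n2 j) x))" for x
    unfolding rep_pointwise[OF c2] sum_distrib_right
    by (rule sum.cong[OF refl]) (simp add: power_add mult_ac)
  have "(\<integral>x. (\<Sum>b=1..length n2. poly (rep n2 l c b) x * w2 b x) * w1 (blk n1 i) x * x ^ (kexp n1 i) \<partial>M)
     = (\<integral>x. (\<Sum>j\<le>l. c j * (x ^ (kexp n1 i + kexp n2 j) * w1 (blk n1 i) x * w2 (blk n2 j) x)) \<partial>M)"
    unfolding pw2 ..
  also have "\<dots> = (\<Sum>j\<le>l. \<integral>x. c j * (x ^ (kexp n1 i + kexp n2 j) * w1 (blk n1 i) x * w2 (blk n2 j) x) \<partial>M)"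
    by (rule Bochner_Integration.integral_sum[where f="\<lambda>j x. c j * (x ^ (kexp n1 i + kexp n2 j) * w1 (blk n1 i) x * w2 (blk n2 j) x)"]) (rule int)
  also have "\<dots> = (\<Sum>j\<le>l. moment M n1 n2 w1 w2 i j * c j)"
    unfolding moment_def by (rule sum.cong[OF refl]) (simp add: mult.commute)
  finally show "(\<integral>x. (\<Sum>b=1..length n2. poly (rep n2 l c b) x * w2 b x) * w1 (blk n1 i) x * x ^ (kexp n1 i) \<partial>M)
       = (\<Sum>j\<le>l. moment M n1 n2 w1 w2 i j * c j)" .
qed


theorem proposition2p3:
  fixes M :: "real measure" and \<Delta> :: "real set"
    and n1 n2 :: "nat list"
    and w1 w2 :: "nat \<Rightarrow> real \<Rightarrow> real"
    and S Sbar Sbar' :: "nat \<Rightarrow> nat \<Rightarrow> real"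
    and l :: nat
  assumes interval: "is_interval \<Delta>"
    and sets_M: "sets M = sets borel"
    and finite_M: "finite_measure M"
    and conc: "emeasure M (UNIV - \<Delta>) = 0"
    and supp: "infinite (measure_support M)"
    and comp1: "composition n1" and comp2: "composition n2"
    and w1_meas: "\<And>a. a \<in> {1..length n1} \<Longrightarrow> w1 a \<in> borel_measurable borel"
    and w2_meas: "\<And>b. b \<in> {1..length n2} \<Longrightarrow> w2 b \<in> borel_measurable borel"
    and w1_int: "\<And>a. a \<in> {1..length n1} \<Longrightarrow> integrable M (w1 a)"
    and w2_int: "\<And>b. b \<in> {1..length n2} \<Longrightarrow> integrable M (w2 b)"
    and w1_sign: "\<And>a. a \<in> {1..length n1} \<Longrightarrow> not_changing_sign \<Delta> (w1 a)"
    and w2_sign: "\<And>b. b \<in> {1..length n2} \<Longrightarrow> not_changing_sign \<Delta> (w2 b)"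
    and moments_fin: "\<And>a b k. a \<in> {1..length n1} \<Longrightarrow> b \<in> {1..length n2} \<Longrightarrow>
                         integrable M (\<lambda>x. x ^ k * w1 a x * w2 b x)"
    and perf: "perfect M (length n1) (length n2) w1 w2"
    and S_lower: "\<And>i j. i < j \<Longrightarrow> S i j = 0"
    and S_diag: "\<And>i. S i i = 1"
    and Sbar_upper: "\<And>i j. j < i \<Longrightarrow> Sbar i j = 0"
    and Sbar_diag: "\<And>i. Sbar i i \<noteq> 0"
    and GB: "\<And>i j. (\<Sum>k\<le>i. S i k * moment M n1 n2 w1 w2 k j) = Sbar i j"
    and Sbar'_upper: "\<And>i j. j < i \<Longrightarrow> Sbar' i j = 0"
    and Sbar'_inv: "\<And>i j. (\<Sum>k\<in>{i..j}. Sbar i k * Sbar' k j) = (if i = j then 1 else 0)"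
  shows
    "typeII_sys M n1 n2 w1 w2 l
        (\<lambda>a. \<Sum>i\<in>{i. i \<le> l \<and> blk n1 i = a}. monom (S l i) (kexp n1 i))
     \<and> (\<forall>A. typeII_sys M n1 n2 w1 w2 l A \<longrightarrow>
           (\<forall>a\<in>{1..length n1}.
              A a = (\<Sum>i\<in>{i. i \<le> l \<and> blk n1 i = a}. monom (S l i) (kexp n1 i))))
     \<and> typeI_sys M n1 n2 w1 w2 l
        (\<lambda>b. \<Sum>j\<in>{j. j \<le> l \<and> blk n2 j = b}. monom (Sbar' j l) (kexp n2 j))
     \<and> (\<forall>B. typeI_sys M n1 n2 w1 w2 l B \<longrightarrow>
           (\<forall>b\<in>{1..length n2}.
              B b = (\<Sum>j\<in>{j. j \<le> l \<and> blk n2 j = b}. monom (Sbar' j l) (kexp n2 j))))"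
proof -
  let ?g = "moment M n1 n2 w1 w2"
  let ?p1 = "length n1" and ?p2 = "length n2"
  note c1 = comp1 and c2 = comp2
  note EI = expand_int[where M=M and ?w1.0=w1 and ?w2.0=w2, OF c1 c2 moments_fin]
  define T where "T i m = (\<Sum>j\<le>m. ?g i j * Sbar' j m)" for i m
  have ST: "(\<Sum>k\<le>i. S i k * T k m) = (if i = m then 1 else 0)" for i m
  proof -
    have "(\<Sum>k\<le>i. S i k * T k m) = (\<Sum>k\<le>i. \<Sum>j\<le>m. S i k * ?g k j * Sbar' j m)"
      unfolding T_def sum_distrib_left by (simp add: mult.assoc)
    also have "\<dots> = (\<Sum>j\<le>m. \<Sum>k\<le>i. S i k * ?g k j * Sbar' j m)" by (rule sum.swap)
    also have "\<dots> = (\<Sum>j\<le>m. Sbar i j * Sbar' j m)"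
      by (rule sum.cong[OF refl]) (simp add: GB[symmetric] sum_distrib_right)
    also have "\<dots> = (if i = m then 1 else 0)"
    proof (cases "i \<le> m")
      case True
      have "(\<Sum>j\<le>m. Sbar i j * Sbar' j m) = (\<Sum>j\<in>{i..m}. Sbar i j * Sbar' j m)"
        by (rule sum.mono_neutral_right) (auto simp: Sbar_upper)
      thus ?thesis using Sbar'_inv[of i m] by simp
    next
      case False
      have "(\<Sum>j\<le>m. Sbar i j * Sbar' j m) = 0" by (rule sum.neutral) (use False Sbar_upper in auto)
      thus ?thesis using False by simp
    qed
    finally show ?thesis .
  qed
  have Tinv: "(\<forall>i<m. T i m = 0) \<and> T m m = 1" for m
    by (rule unitri_inv[where S=S]) (use S_diag S_lower ST in auto)
  hence Tlow: "i < m \<Longrightarrow> T i m = 0" and Tdiag: "T m m = 1" for i m by auto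

  define Acand where "Acand = rep n1 l (S l)"
  define Bcand where "Bcand = rep n2 l (\<lambda>j. Sbar' j l)"
  have Aeq: "Acand = (\<lambda>a. \<Sum>i\<in>{i. i \<le> l \<and> blk n1 i = a}. monom (S l i) (kexp n1 i))"
    unfolding Acand_def by (rule ext) (simp add: rep_def)
  have Beq: "Bcand = (\<lambda>b. \<Sum>j\<in>{j. j \<le> l \<and> blk n2 j = b}. monom (Sbar' j l) (kexp n2 j))"
    unfolding Bcand_def by (rule ext) (simp add: rep_def)

  have nucl: "nuc n1 (blk n1 l) (Suc l) = kexp n1 l + 1"
    using nuc_Suc[of n1 "blk n1 l" l] kexp_nuc[OF c1, of l] by simp

  have II: "typeII_sys M n1 n2 w1 w2 l Acand"
    unfolding typeII_sys_def
  proof (intro conjI ballI allI impI)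
    fix a assume "a \<in> {1..?p1}"
    show "deg_le (Acand a) (nuc n1 a (Suc l))" unfolding Acand_def by (rule rep_deg_le[OF c1])
  next
    have hit: "coeff (Acand (blk n1 l)) (kexp n1 l) = 1"
      unfolding Acand_def using coeff_rep_hit[OF c1, of l l "S l"] S_diag by simp
    have zero: "coeff (Acand (blk n1 l)) k = 0" if "kexp n1 l < k" for k
      unfolding Acand_def
    proof (rule coeff_rep_miss)
      fix i assume "i \<le> l" "blk n1 i = blk n1 l"
      thus "kexp n1 i \<noteq> k" using N1[OF c1, of i "Suc l"] nucl that by auto
    qed
    have deg: "degree (Acand (blk n1 l)) = kexp n1 l"
    proof (rule antisym)
      show "degree (Acand (blk n1 l)) \<le> kexp n1 l" by (rule degree_le) (use zero in auto)
      show "kexp n1 l \<le> degree (Acand (blk n1 l))" by (rule le_degree) (use hit in simp)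
    qed
    show "degree (Acand (blk n1 l)) = nuc n1 (blk n1 l) (Suc l) - 1" using deg nucl by simp
    show "lead_coeff (Acand (blk n1 l)) = 1" using deg hit by simp
  next
    fix b k assume b: "b \<in> {1..?p2}" and k: "k < nuc n2 b l"
    obtain j where j: "j < l" "blk n2 j = b" "kexp n2 j = k" using N2[OF c2 k] by auto
    have "(\<integral>x. (\<Sum>a=1..?p1. poly (Acand a) x * w1 a x) * w2 b x * x ^ k \<partial>M)
        = (\<Sum>i\<le>l. S l i * ?g i j)" unfolding Acand_def using EI(1)[where l=l and c="S l" and j=j] j by simp
    also have "\<dots> = Sbar l j" using GB[of l j] by simp
    also have "\<dots> = 0" using Sbar_upper j by simp
    finally show "(\<integral>x. (\<Sum>a=1..?p1. poly (Acand a) x * w1 a x) * w2 b x * x ^ k \<partial>M) = 0" .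
  qed

  have IIu: "\<forall>a\<in>{1..?p1}. A a = Acand a" if A: "typeII_sys M n1 n2 w1 w2 l A" for A
  proof -
    define d where "d i = coeff (A (blk n1 i)) (kexp n1 i)" for i
    have Arep: "A a = rep n1 l d a" if a: "a \<in> {1..?p1}" for a
      by (rule rep_repr[OF c1]) (use A a in \<open>auto simp: typeII_sys_def d_def\<close>)
    have orth: "(\<Sum>i\<le>l. d i * ?g i j) = 0" if j: "j < l" for j
    proof -
      have b: "blk n2 j \<in> {1..?p2}" by (rule blk_range[OF c2])
      have k: "kexp n2 j < nuc n2 (blk n2 j) l" by (rule N1[OF c2 j])
      have "(\<integral>x. (\<Sum>a=1..?p1. poly (A a) x * w1 a x) * w2 (blk n2 j) x * x ^ kexp n2 j \<partial>M) = 0"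
        using A b k unfolding typeII_sys_def by blast
      moreover have "(\<Sum>a=1..?p1. poly (A a) x * w1 a x) = (\<Sum>a=1..?p1. poly (rep n1 l d a) x * w1 a x)" for x
        by (rule sum.cong) (auto simp: Arep)
      ultimately show ?thesis using EI(1)[where l=l and c=d and j=j] by simp
    qed
    have dl: "d l = 1"
    proof -
      have "degree (A (blk n1 l)) = kexp n1 l" using A nucl unfolding typeII_sys_def by simp
      moreover have "lead_coeff (A (blk n1 l)) = 1" using A unfolding typeII_sys_def by blast
      ultimately show ?thesis unfolding d_def by simp
    qed
    define e where "e i = d i - S l i" for i
    have el: "e l = 0" using dl S_diag by (simp add: e_def)
    have eorth: "(\<Sum>i<l. e i * ?g i j) = 0" if j: "j < l" for j
    proof -
      have "(\<Sum>i\<le>l. e i * ?g i j) = (\<Sum>i\<le>l. d i * ?g i j) - (\<Sum>i\<le>l. S l i * ?g i j)"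
        unfolding e_def by (simp add: left_diff_distrib sum_subtractf)
      also have "\<dots> = 0" using orth[OF j] GB[of l j] Sbar_upper[OF j] by simp
      finally show ?thesis using split_last[of "\<lambda>i. e i * ?g i j" l] el by simp
    qed
    have eT: "(\<Sum>i<l. e i * T i m) = 0" if m: "m < l" for m
    proof -
      have "(\<Sum>i<l. e i * T i m) = (\<Sum>j\<le>m. (\<Sum>i<l. e i * ?g i j) * Sbar' j m)"
        unfolding T_def sum_distrib_left sum_distrib_right
        by (subst sum.swap) (simp add: mult.assoc)
      also have "\<dots> = 0" by (rule sum.neutral) (use eorth m in auto)
      finally show ?thesis .
    qed
    have ez: "e m = 0" if "m < l" for m
      using that
    proof (induction "l - m" arbitrary: m rule: less_induct)
      case (less m)
      have "(\<Sum>i<l. e i * T i m) = e m * T m m"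
      proof (rule delta_sum)
        fix i assume i: "i \<in> {..<l}" "i \<noteq> m"
        show "e i * T i m = 0"
        proof (cases "i < m")
          case True thus ?thesis using Tlow by simp
        next
          case False
          hence "m < i" using i by simp
          hence "e i = 0" using less.hyps[of i] i less.prems by simp
          thus ?thesis by simp
        qed
      qed (use less.prems in auto)
      thus ?case using eT[OF less.prems] Tdiag by simp
    qed
    have dS: "d i = S l i" if "i \<le> l" for i
      using that ez el unfolding e_def by (cases "i = l") auto
    show ?thesis
    proof
      fix a assume a: "a \<in> {1..?p1}"
      show "A a = Acand a" unfolding Arep[OF a] Acand_def by (rule rep_cong) (rule dS)
    qed
  qed

  have I: "typeI_sys M n1 n2 w1 w2 l Bcand"
    unfolding typeI_sys_def
  proof (intro conjI ballI allI impI)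
    fix b assume "b \<in> {1..?p2}"
    show "deg_le (Bcand b) (nuc n2 b (Suc l))" unfolding Bcand_def by (rule rep_deg_le[OF c2])
  next
    fix a k assume a: "a \<in> {1..?p1}" and k: "k < nuc n1 a l"
    obtain i where i: "i < l" "blk n1 i = a" "kexp n1 i = k" using N2[OF c1 k] by auto
    have "(\<integral>x. (\<Sum>b=1..?p2. poly (Bcand b) x * w2 b x) * w1 a x * x ^ k \<partial>M) = T i l"
      unfolding Bcand_def T_def using EI(2)[where l=l and c="\<lambda>j. Sbar' j l" and i=i] i by simp
    thus "(\<integral>x. (\<Sum>b=1..?p2. poly (Bcand b) x * w2 b x) * w1 a x * x ^ k \<partial>M) = 0"
      using Tlow[OF i(1)] by simp
  next
    have "(\<integral>x. (\<Sum>b=1..?p2. poly (Bcand b) x * w2 b x) * w1 (blk n1 l) x * x ^ (nuc n1 (blk n1 l) l) \<partial>M) = T l l"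
      unfolding Bcand_def T_def using EI(2)[where l=l and c="\<lambda>j. Sbar' j l" and i=l] kexp_nuc[OF c1, of l] by simp
    thus "(\<integral>x. (\<Sum>b=1..?p2. poly (Bcand b) x * w2 b x) * w1 (blk n1 l) x * x ^ (nuc n1 (blk n1 l) l) \<partial>M) = 1"
      using Tdiag by simp
  qed

  have Iu: "\<forall>b\<in>{1..?p2}. B b = Bcand b" if B: "typeI_sys M n1 n2 w1 w2 l B" for B
  proof -
    define c where "c j = coeff (B (blk n2 j)) (kexp n2 j)" for j
    have Brep: "B b = rep n2 l c b" if b: "b \<in> {1..?p2}" for b
      by (rule rep_repr[OF c2]) (use B b in \<open>auto simp: typeI_sys_def c_def\<close>)
    have intB: "(\<integral>x. (\<Sum>b=1..?p2. poly (B b) x * w2 b x) * w1 (blk n1 i) x * x ^ kexp n1 i \<partial>M)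
        = (\<Sum>j\<le>l. ?g i j * c j)" for i
    proof -
      have "(\<Sum>b=1..?p2. poly (B b) x * w2 b x) = (\<Sum>b=1..?p2. poly (rep n2 l c b) x * w2 b x)" for x
        by (rule sum.cong) (auto simp: Brep)
      thus ?thesis using EI(2)[where l=l and c=c and i=i] by simp
    qed
    have gc: "(\<Sum>j\<le>l. ?g i j * c j) = T i l" if i: "i \<le> l" for i
    proof (cases "i = l")
      case True
      have "(\<integral>x. (\<Sum>b=1..?p2. poly (B b) x * w2 b x) * w1 (blk n1 l) x * x ^ kexp n1 l \<partial>M) = 1"
        using B kexp_nuc[OF c1, of l] unfolding typeI_sys_def by simp
      thus ?thesis using intB[of l] Tdiag True by simp
    next
      case False
      hence il: "i < l" using i by simp
      have a: "blk n1 i \<in> {1..?p1}" by (rule blk_range[OF c1])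
      have k: "kexp n1 i < nuc n1 (blk n1 i) l" by (rule N1[OF c1 il])
      have "(\<integral>x. (\<Sum>b=1..?p2. poly (B b) x * w2 b x) * w1 (blk n1 i) x * x ^ kexp n1 i \<partial>M) = 0"
        using B a k unfolding typeI_sys_def by blast
      thus ?thesis using intB[of i] Tlow[OF il] by simp
    qed
    define e where "e j = c j - Sbar' j l" for j
    have ge: "(\<Sum>j\<le>l. ?g i j * e j) = 0" if i: "i \<le> l" for i
      using gc[OF i] unfolding e_def T_def by (simp add: right_diff_distrib sum_subtractf)
    have Se: "(\<Sum>j\<le>l. Sbar i j * e j) = 0" if i: "i \<le> l" for i
    proof -
      have "(\<Sum>j\<le>l. Sbar i j * e j) = (\<Sum>k\<le>i. S i k * (\<Sum>j\<le>l. ?g k j * e j))"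
        unfolding GB[symmetric] sum_distrib_left sum_distrib_right
        by (subst sum.swap) (simp add: mult.assoc)
      also have "\<dots> = 0" by (rule sum.neutral) (use ge i in auto)
      finally show ?thesis .
    qed
    have ez: "e i = 0" if "i \<le> l" for i
      using that
    proof (induction "l - i" arbitrary: i rule: less_induct)
      case (less i)
      have "(\<Sum>j\<le>l. Sbar i j * e j) = Sbar i i * e i"
      proof (rule delta_sum)
        fix j assume j: "j \<in> {..l}" "j \<noteq> i"
        show "Sbar i j * e j = 0"
        proof (cases "j < i")
          case True thus ?thesis using Sbar_upper by simp
        next
          case False
          hence "i < j" using j by simp
          hence "e j = 0" using less.hyps[of j] j less.prems by simp
          thus ?thesis by simp
        qed
      qed (use less.prems in auto)
      thus ?case using Se[OF less.prems] Sbar_diag[of i] by simp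
    qed
    show ?thesis
    proof
      fix b assume b: "b \<in> {1..?p2}"
      show "B b = Bcand b" unfolding Brep[OF b] Bcand_def
        by (rule rep_cong) (use ez in \<open>auto simp: e_def\<close>)
    qed
  qed
  show ?thesis using II IIu I Iu unfolding Aeq Beq by blast
qed

end
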